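(* Let $S=\{0,1,2,\dots\}$, let $\lambda,\mu>0$, and let $Q=\{q(i,j):i,j\in S\}$ be given by $q(i,i+1)=\lambda$; $q(i,i+k)=0$ for $k\ge 2$; $q(i,i-k)=\mu$ for $i\ge 1$ and $k=1,\dots,i$; $q(i,j)=0$ for $j<0$ (i.e. no jumps below $0$); and $q(i,i)=-(\lambda+i\mu)$. Let $\Pi=\{\pi(i,j)\}$ be the associated jump matrix: $c(i)=\lambda+i\mu$, $\pi(i,j)=q(i,j)/c(i)$ for $i\neq j$, $\pi(i,i)=0$. Then any discrete-time Markov chain on $S$ with initial distribution a strictly positive probability measure $\tau$ on $S$ and transition probabilities $\pi(i,j)$ is irreducible and recurrent. Consequently, the minimal nonnegative solution $p^*_t(x,y)$ of the Kolmogorov backward equations $$\frac{d}{dt}p_t(x,y)=\sum_{z\in S}q(x,z)p_t(z,y)\ (t>0,\ x,y\in S),\qquad p_0(x,y)=\delta_{xy},$$ is stochastic, i.e. $\sum_{y\in S}p^*_t(x,y)=1$ for all $x\in S$, $t\ge 0$.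
   Context: The minimal solution of the backward equations is the standard one associated with a conservative rate matrix $Q$ (nonnegative off-diagonal entries, rows summing to $0$); it is known to satisfy the Chapman–Kolmogorov equations and all transition-function properties except possibly $\sum_y p_t(x,y)=1$. *)

theory Defs
  imports "HOL-Analysis.Analysis"
begin

definition qrate :: "real \<Rightarrow> real \<Rightarrow> nat \<Rightarrow> nat \<Rightarrow> real" where
  "qrate lam mu i j =
     (if j = Suc i then lam
      else if j < i then mu
      else if j = i then - (lam + real i * mu)
      else 0)"

definition crate :: "real \<Rightarrow> real \<Rightarrow> nat \<Rightarrow> real" where
  "crate lam mu i = lam + real i * mu"

definition jump :: "real \<Rightarrow> real \<Rightarrow> nat \<Rightarrow> nat \<Rightarrow> real" where
  "jump lam mu i j = (if i \<noteq> j then qrate lam mu i j / crate lam mu i else 0)"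

fun nstep :: "(nat \<Rightarrow> nat \<Rightarrow> real) \<Rightarrow> nat \<Rightarrow> nat \<Rightarrow> nat \<Rightarrow> real" where
  "nstep P 0 i j = (if i = j then 1 else 0)"
| "nstep P (Suc n) i j = (\<Sum>k. P i k * nstep P n k j)"

definition dtmc_irreducible :: "(nat \<Rightarrow> nat \<Rightarrow> real) \<Rightarrow> bool" where
  "dtmc_irreducible P \<longleftrightarrow> (\<forall>i j. \<exists>n. nstep P n i j > 0)"

text \<open>first_passage P n i j = probability, starting at i, that the first visit to j
  (at a time \<ge> 1) happens at time n+1.\<close>
fun first_passage :: "(nat \<Rightarrow> nat \<Rightarrow> real) \<Rightarrow> nat \<Rightarrow> nat \<Rightarrow> nat \<Rightarrow> real" where
  "first_passage P 0 i j = P i j"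
| "first_passage P (Suc n) i j = (\<Sum>k. if k = j then 0 else P i k * first_passage P n k j)"

definition recurrent_state :: "(nat \<Rightarrow> nat \<Rightarrow> real) \<Rightarrow> nat \<Rightarrow> bool" where
  "recurrent_state P i \<longleftrightarrow> ((\<lambda>n. first_passage P n i i) sums 1)"

definition dtmc_recurrent :: "(nat \<Rightarrow> nat \<Rightarrow> real) \<Rightarrow> bool" where
  "dtmc_recurrent P \<longleftrightarrow> (\<forall>i. recurrent_state P i)"

definition backward_nonneg_solution ::
  "(nat \<Rightarrow> nat \<Rightarrow> real) \<Rightarrow> (real \<Rightarrow> nat \<Rightarrow> nat \<Rightarrow> real) \<Rightarrow> bool" where
  "backward_nonneg_solution q p \<longleftrightarrow>
     (\<forall>t\<ge>0. \<forall>x y. p t x y \<ge> 0) \<and>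
     (\<forall>x y. p 0 x y = (if x = y then 1 else 0)) \<and>
     (\<forall>x y. ((\<lambda>s. p s x y) \<longlongrightarrow> p 0 x y) (at_right 0)) \<and>
     (\<forall>t>0. \<forall>x y. ((\<lambda>s. p s x y) has_real_derivative (\<Sum>z. q x z * p t z y)) (at t))"

definition minimal_backward_solution ::
  "(nat \<Rightarrow> nat \<Rightarrow> real) \<Rightarrow> (real \<Rightarrow> nat \<Rightarrow> nat \<Rightarrow> real) \<Rightarrow> bool" where
  "minimal_backward_solution q p \<longleftrightarrow>
     backward_nonneg_solution q p \<and>
     (\<forall>p'. backward_nonneg_solution q p' \<longrightarrow> (\<forall>t\<ge>0. \<forall>x y. p t x y \<le> p' t x y))"

end

theory Submission
  imports Defs
begin

declare first_passage.simps(2)[simp del] nstep.simps(2)[simp del] sum.atMost_Suc[simp del]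

locale chain =
  fixes lam mu :: real
  assumes lam_pos: "lam > 0" and mu_pos: "mu > 0"
begin

abbreviation "J \<equiv> jump lam mu"

lemma crate_pos: "crate lam mu i > 0"
  using lam_pos mu_pos unfolding crate_def by (simp add: add_pos_nonneg)

lemma jump_eq: "J i l = (if l = Suc i then lam / crate lam mu i else if l < i then mu / crate lam mu i else 0)"
  unfolding jump_def qrate_def by auto

lemma jump_nonneg: "J i l \<ge> 0"
  using crate_pos[of i] lam_pos mu_pos by (simp add: jump_eq)

lemma jump_zero: "l > Suc i \<Longrightarrow> J i l = 0"
  by (simp add: jump_eq)

lemma jump_up_pos: "J i (Suc i) > 0"
  using crate_pos[of i] lam_pos by (simp add: jump_eq)

lemma jump_down_pos: "l < i \<Longrightarrow> J i l > 0"
  using crate_pos[of i] mu_pos by (simp add: jump_eq)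

lemma suminf_row: fixes g :: "nat \<Rightarrow> real" assumes "\<And>l. l > Suc i \<Longrightarrow> g l = 0" shows "suminf g = (\<Sum>l\<le>Suc i. g l)"
  by (rule suminf_finite) (use assms in auto)

lemma row_sum: "(\<Sum>l\<le>Suc i. J i l) = 1"
proof -
  have "(\<Sum>l\<le>Suc i. J i l) = (\<Sum>l<i. J i l) + J i i + J i (Suc i)"
    by (simp add: lessThan_Suc_atMost[symmetric])
  also have "(\<Sum>l<i. J i l) = (\<Sum>l<i. mu / crate lam mu i)"
    by (rule sum.cong) (auto simp: jump_eq)
  also have "J i i = 0" by (simp add: jump_eq)
  also have "J i (Suc i) = lam / crate lam mu i" by (simp add: jump_eq)
  finally have "(\<Sum>l\<le>Suc i. J i l) = (real i * mu + lam) / crate lam mu i"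
    by (simp add: add_divide_distrib)
  also have "\<dots> = 1" using crate_pos[of i] by (simp add: crate_def)
  finally show ?thesis .
qed

lemma nstep_Suc: "nstep J (Suc n) i j = (\<Sum>k\<le>Suc i. J i k * nstep J n k j)"
  unfolding nstep.simps(2) by (rule suminf_row) (simp add: jump_zero)

lemma nstep_nonneg: "nstep J n i j \<ge> 0"
proof (induction n arbitrary: i)
  case 0 then show ?case by simp
next
  case (Suc n) then show ?case
    unfolding nstep_Suc by (intro sum_nonneg mult_nonneg_nonneg jump_nonneg Suc.IH)
qed

lemma nstep_ge: "nstep J (Suc n) i j \<ge> J i k * nstep J n k j"
proof (cases "k \<le> Suc i")
  case True
  show ?thesis unfolding nstep_Suc
    by (rule member_le_sum[where f="\<lambda>k. J i k * nstep J n k j"])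
       (use True in \<open>auto intro!: mult_nonneg_nonneg jump_nonneg nstep_nonneg\<close>)
next
  case False
  then show ?thesis using nstep_nonneg[of "Suc n" i j] by (simp add: jump_zero)
qed

lemma nstep_up: "nstep J m i (i + m) > 0"
proof (induction m arbitrary: i)
  case 0 then show ?case by simp
next
  case (Suc m)
  have "0 < J i (Suc i) * nstep J m (Suc i) (Suc i + m)"
    using Suc.IH[of "Suc i"] jump_up_pos[of i] by simp
  also have "\<dots> \<le> nstep J (Suc m) i (i + Suc m)"
    using nstep_ge[where n=m and i=i and j="i + Suc m" and k="Suc i"] by simp
  finally show ?case .
qed

lemma irreducible: "dtmc_irreducible J"
  unfolding dtmc_irreducible_def
proof (intro allI)
  fix i j :: nat
  consider "j < i" | "j = i" | "i < j" by linarith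
  then show "\<exists>n. nstep J n i j > 0"
  proof cases
    case 1
    have "0 < J i j * nstep J 0 j j" using jump_down_pos[OF 1] by simp
    also have "\<dots> \<le> nstep J 1 i j" using nstep_ge[where n=0 and i=i and j=j and k=j] by simp
    finally show ?thesis by blast
  next
    case 2
    have a: "0 < J (Suc i) i * nstep J 0 i i" using jump_down_pos[of i "Suc i"] by simp
    also have "\<dots> \<le> nstep J 1 (Suc i) i" using nstep_ge[where n=0 and i="Suc i" and j=i and k=i] by simp
    finally have "0 < J i (Suc i) * nstep J 1 (Suc i) i" using jump_up_pos[of i] by simp
    also have "\<dots> \<le> nstep J 2 i i" using nstep_ge[where n=1 and i=i and j=i and k="Suc i"] by (simp add: numeral_2_eq_2)
    finally show ?thesis using 2 by blast
  next
    case 3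
    then show ?thesis using nstep_up[of "j - i" i] by auto
  qed
qed


definition "tw j k l = (if l = j then 0 else J k l)"
definition "Tj j k g = (\<Sum>l\<le>Suc k. tw j k l * g l)"
definition "surv j n k = 1 - (\<Sum>m\<le>n. first_passage J m k j)"

lemma tw_nonneg: "tw j k l \<ge> 0" by (simp add: tw_def jump_nonneg)

lemma fp_Suc: "first_passage J (Suc n) k j = Tj j k (\<lambda>l. first_passage J n l j)"
  unfolding first_passage.simps(2) Tj_def
  by (rule trans[OF suminf_row]) (auto simp: jump_zero tw_def intro!: sum.cong)

lemma fp_nonneg: "first_passage J n k j \<ge> 0"
proof (induction n arbitrary: k)
  case 0 then show ?case by (simp add: jump_nonneg)
next
  case (Suc n) then show ?case unfolding fp_Suc Tj_def
    by (intro sum_nonneg mult_nonneg_nonneg tw_nonneg Suc.IH)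
qed

lemma Tj_one: "Tj j k (\<lambda>_. 1) = 1 - J k j"
proof -
  have "Tj j k (\<lambda>_. 1) = (\<Sum>l\<le>Suc k. J k l - (if l = j then J k l else 0))"
    unfolding Tj_def tw_def by (rule sum.cong) auto
  also have "\<dots> = 1 - (if j \<in> {..Suc k} then J k j else 0)"
    by (simp add: sum_subtractf row_sum sum.delta)
  also have "\<dots> = 1 - J k j" by (auto simp: jump_zero)
  finally show ?thesis .
qed

lemma surv_0: "surv j 0 k = Tj j k (\<lambda>_. 1)"
  by (simp add: surv_def Tj_one)

lemma surv_Suc: "surv j (Suc n) k = Tj j k (surv j n)"
proof -
  have "surv j (Suc n) k = 1 - J k j - (\<Sum>m\<le>n. first_passage J (Suc m) k j)"
    unfolding surv_def by (simp add: sum.atMost_Suc_shift)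
  also have "(\<Sum>m\<le>n. first_passage J (Suc m) k j) = (\<Sum>m\<le>n. \<Sum>l\<le>Suc k. tw j k l * first_passage J m l j)"
    by (simp add: fp_Suc Tj_def)
  also have "\<dots> = (\<Sum>l\<le>Suc k. tw j k l * (\<Sum>m\<le>n. first_passage J m l j))"
    by (subst sum.swap) (simp add: sum_distrib_left)
  also have "Tj j k (surv j n) = Tj j k (\<lambda>_. 1) - (\<Sum>l\<le>Suc k. tw j k l * (\<Sum>m\<le>n. first_passage J m l j))"
    unfolding Tj_def surv_def by (simp add: right_diff_distrib sum_subtractf)
  ultimately show ?thesis by (simp add: Tj_one)
qed

lemma surv_le1: "surv j n k \<le> 1"
  unfolding surv_def by (simp add: sum_nonneg fp_nonneg)

lemma surv_nonneg: "surv j n k \<ge> 0"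
proof (induction n arbitrary: k)
  case 0 show ?case unfolding surv_0 Tj_def by (intro sum_nonneg mult_nonneg_nonneg tw_nonneg) simp
next
  case (Suc n) show ?case unfolding surv_Suc Tj_def by (intro sum_nonneg mult_nonneg_nonneg tw_nonneg Suc.IH)
qed

lemma surv_dec: "surv j (Suc n) k \<le> surv j n k"
  unfolding surv_def by (simp add: fp_nonneg sum.atMost_Suc)

abbreviation "rho \<equiv> 1 + mu / lam"
definition "V j l = rho ^ (l - j)"

lemma rho_gt1: "rho > 1" using lam_pos mu_pos by simp

lemma V_mono: "l \<le> k \<Longrightarrow> V j l \<le> V j k"
  unfolding V_def using rho_gt1 by (intro power_increasing) auto

lemma TV: assumes "k \<noteq> j" shows "Tj j k (V j) \<le> V j k"
proof (cases "k < j")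
  case True
  have "Tj j k (V j) \<le> (\<Sum>l\<le>Suc k. J k l)"
    unfolding Tj_def
  proof (rule sum_mono)
    fix l assume "l \<in> {..Suc k}"
    then have "V j l = 1" using True by (simp add: V_def)
    then show "tw j k l * V j l \<le> J k l" by (simp add: tw_def jump_nonneg)
  qed
  also have "\<dots> = V j k" using True by (simp add: row_sum V_def)
  finally show ?thesis .
next
  case False
  with assms have kj: "j < k" by simp
  define c where "c = crate lam mu k"
  have c: "c > 0" using crate_pos by (simp add: c_def)
  have VS: "V j (Suc k) = rho * V j k" using kj by (simp add: V_def Suc_diff_le)
  have "Tj j k (V j) \<le> (\<Sum>l\<le>Suc k. V j k * J k l + (if l = Suc k then lam / c * (rho - 1) * V j k else 0) - (if l = j then mu / c * V j k else 0))"
    unfolding Tj_def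
  proof (rule sum_mono)
    fix l assume l: "l \<in> {..Suc k}"
    consider "l = Suc k" | "l = j" | "l = k" | "l < k" "l \<noteq> j" using l by force
    then show "tw j k l * V j l \<le> V j k * J k l + (if l = Suc k then lam / c * (rho - 1) * V j k else 0) - (if l = j then mu / c * V j k else 0)"
    proof cases
      case 1 then show ?thesis using kj by (simp add: tw_def jump_eq c_def VS algebra_simps)
    next
      case 2 then show ?thesis using kj by (simp add: tw_def jump_eq c_def)
    next
      case 3 then show ?thesis using kj by (simp add: tw_def jump_eq c_def)
    next
      case 4
      have "mu / c * V j l \<le> mu / c * V j k"
        using V_mono[of l k j] 4 c mu_pos by (intro mult_left_mono) auto
      then show ?thesis using 4 by (simp add: tw_def jump_eq c_def mult.commute)
    qed
  qed
  also have "\<dots> = V j k * (\<Sum>l\<le>Suc k. J k l) + lam / c * (rho - 1) * V j k - mu / c * V j k"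
    using kj by (simp add: sum.distrib sum_subtractf sum.delta sum_distrib_left)
  also have "\<dots> = V j k" using lam_pos by (simp add: row_sum)
  finally show ?thesis .
qed


definition "hlim j k = lim (\<lambda>n. surv j n k)"

lemma surv_tendsto: "(\<lambda>n. surv j n k) \<longlonglongrightarrow> hlim j k"
proof -
  have dec: "decseq (\<lambda>n. surv j n k)" by (rule decseq_SucI) (rule surv_dec)
  have nn: "\<forall>i. 0 \<le> surv j i k" using surv_nonneg by simp
  from decseq_convergent[OF dec nn] obtain L where "(\<lambda>n. surv j n k) \<longlonglongrightarrow> L" by blast
  then show ?thesis unfolding hlim_def by (simp add: limI)
qed

lemma hlim_nonneg: "hlim j k \<ge> 0"
  by (rule tendsto_lowerbound[OF surv_tendsto]) (auto simp: surv_nonneg)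

lemma hlim_le1: "hlim j k \<le> 1"
  by (rule tendsto_upperbound[OF surv_tendsto]) (auto simp: surv_le1)

lemma hlim_rec: "hlim j k = Tj j k (hlim j)"
proof -
  have "(\<lambda>n. surv j (Suc n) k) \<longlonglongrightarrow> hlim j k" by (rule LIMSEQ_Suc[OF surv_tendsto])
  moreover have "(\<lambda>n. surv j (Suc n) k) \<longlonglongrightarrow> Tj j k (hlim j)"
    unfolding surv_Suc Tj_def by (intro tendsto_sum tendsto_mult_left surv_tendsto)
  ultimately show ?thesis by (rule LIMSEQ_unique)
qed

lemma Tj_diff: "Tj j k (\<lambda>l. f l - c * g l) = Tj j k f - c * Tj j k g"
  unfolding Tj_def by (simp add: right_diff_distrib sum_subtractf sum_distrib_left algebra_simps)

lemma V_pos: "V j l > 0" unfolding V_def using rho_gt1 by simp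

lemma hlim_zero: assumes "k1 \<noteq> j" shows "hlim j k1 \<le> 0"
proof (rule ccontr)
  assume "\<not> hlim j k1 \<le> 0"
  then have hk1: "hlim j k1 > 0" by simp
  define h where "h = hlim j"
  define eps where "eps = h k1 / (2 * V j k1)"
  have eps: "eps > 0" using hk1 V_pos[of j k1] by (simp add: eps_def h_def)
  define u where "u l = h l - eps * V j l" for l
  have uk1: "u k1 > 0" using V_pos[of j k1] hk1 by (simp add: u_def eps_def h_def)
  obtain n where n: "1 / eps < rho ^ n" using real_arch_pow[OF rho_gt1] by blast
  define K where "K = j + n"
  have big: "u l < 0" if "l > K" for l
  proof -
    have "rho ^ n \<le> V j l" unfolding V_def using that rho_gt1 by (intro power_increasing) (auto simp: K_def)
    then have "1 / eps < V j l" using n by simp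
    then have "1 < eps * V j l" using eps by (simp add: field_simps)
    then show ?thesis using hlim_le1[of j l] by (simp add: u_def h_def)
  qed
  define Ms where "Ms = {l. l \<le> K \<and> l \<noteq> j}"
  have finMs: "finite Ms" unfolding Ms_def by simp
  have k1M: "k1 \<in> Ms" using big[of k1] uk1 assms by (force simp: Ms_def)
  define Mx where "Mx = Max (u ` Ms)"
  have Mx_ge: "u l \<le> Mx" if "l \<in> Ms" for l unfolding Mx_def using finMs that by auto
  have Mxpos: "Mx > 0" using Mx_ge[OF k1M] uk1 by simp
  have MxIn: "Mx \<in> u ` Ms" unfolding Mx_def using finMs k1M by (intro Max_in) auto
  define A where "A = {l \<in> Ms. u l = Mx}"
  have finA: "finite A" using finMs by (simp add: A_def)
  have Ane: "A \<noteq> {}" using MxIn by (auto simp: A_def)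
  define k0 where "k0 = Max A"
  have k0A: "k0 \<in> A" unfolding k0_def using finA Ane by (rule Max_in)
  have k0j: "k0 \<noteq> j" and uk0: "u k0 = Mx" using k0A by (auto simp: A_def Ms_def)
  have le_all: "u l \<le> Mx" if "l \<noteq> j" for l
  proof (cases "l \<le> K")
    case True then show ?thesis using Mx_ge that by (auto simp: Ms_def)
  next
    case False then show ?thesis using big[of l] Mxpos by simp
  qed
  have lt_above: "u l < Mx" if "l \<noteq> j" "l > k0" for l
  proof (cases "l \<le> K")
    case True
    then have lM: "l \<in> Ms" using that by (simp add: Ms_def)
    have "u l \<noteq> Mx"
    proof
      assume "u l = Mx"
      then have "l \<in> A" using lM by (simp add: A_def)
      then have "l \<le> k0" unfolding k0_def using finA by simp
      then show False using that by simp
    qed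
    then show ?thesis using Mx_ge[OF lM] by simp
  next
    case False then show ?thesis using big[of l] Mxpos by simp
  qed
  have sub: "u k0 \<le> Tj j k0 u"
  proof -
    have "Tj j k0 u = Tj j k0 h - eps * Tj j k0 (V j)"
      unfolding u_def by (rule Tj_diff)
    also have "Tj j k0 h = h k0" unfolding h_def by (rule hlim_rec[symmetric])
    finally have "Tj j k0 u = h k0 - eps * Tj j k0 (V j)" .
    moreover have "eps * Tj j k0 (V j) \<le> eps * V j k0"
      using TV[OF k0j] eps by (intro mult_left_mono) auto
    ultimately show ?thesis by (simp add: u_def)
  qed
  have strict: "Tj j k0 u < (\<Sum>l\<le>Suc k0. J k0 l * Mx)"
    unfolding Tj_def
  proof (rule sum_strict_mono_ex1)
    show "\<forall>l\<in>{..Suc k0}. tw j k0 l * u l \<le> J k0 l * Mx"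
    proof
      fix l assume "l \<in> {..Suc k0}"
      show "tw j k0 l * u l \<le> J k0 l * Mx"
      proof (cases "l = j")
        case True then show ?thesis using Mxpos jump_nonneg[of k0 l] by (simp add: tw_def)
      next
        case False then show ?thesis using le_all[OF False] jump_nonneg[of k0 l]
          by (simp add: tw_def mult_left_mono)
      qed
    qed
    show "\<exists>l\<in>{..Suc k0}. tw j k0 l * u l < J k0 l * Mx"
    proof (cases "j \<le> Suc k0")
      case True
      have "J k0 j > 0"
      proof (cases "j = Suc k0")
        case True then show ?thesis by (simp add: jump_up_pos)
      next
        case False then have "j < k0" using \<open>j \<le> Suc k0\<close> k0j by simp
        then show ?thesis by (rule jump_down_pos)
      qed
      then have "tw j k0 j * u j < J k0 j * Mx" using Mxpos by (simp add: tw_def)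
      then show ?thesis using True by blast
    next
      case False
      then have "Suc k0 \<noteq> j" by simp
      then have "tw j k0 (Suc k0) * u (Suc k0) < J k0 (Suc k0) * Mx"
        using lt_above[of "Suc k0"] jump_up_pos[of k0] by (simp add: tw_def)
      then show ?thesis by blast
    qed
  qed simp
  have "(\<Sum>l\<le>Suc k0. J k0 l * Mx) = Mx" by (simp add: sum_distrib_right[symmetric] row_sum)
  then show False using sub strict uk0 by simp
qed

lemma recurrent: "dtmc_recurrent J"
  unfolding dtmc_recurrent_def recurrent_state_def
proof
  fix j
  have "hlim j j \<le> 0"
  proof -
    have "hlim j j = Tj j j (hlim j)" by (rule hlim_rec)
    also have "\<dots> \<le> 0" unfolding Tj_def
    proof (rule sum_nonpos)
      fix l show "tw j j l * hlim j l \<le> 0"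
      proof (cases "l = j")
        case True then show ?thesis by (simp add: tw_def)
      next
        case False then show ?thesis using hlim_zero[OF False] tw_nonneg[of j j l]
          by (simp add: mult_nonneg_nonpos)
      qed
    qed
    finally show ?thesis .
  qed
  then have h0: "hlim j j = 0" using hlim_nonneg[of j j] by simp
  have "(\<lambda>n. 1 - surv j n j) \<longlonglongrightarrow> 1 - 0"
    using surv_tendsto[of j j] h0 by (intro tendsto_intros) simp
  then have "(\<lambda>n. \<Sum>m<Suc n. first_passage J m j j) \<longlonglongrightarrow> 1"
    by (simp add: surv_def lessThan_Suc_atMost)
  then show "(\<lambda>n. first_passage J n j j) sums 1"
    unfolding sums_def by (rule LIMSEQ_imp_Suc)
qed

end



context chain begin

definition aa :: "nat \<Rightarrow> real" where "aa k = lam + real k * mu"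
definition ee :: "nat \<Rightarrow> real" where "ee j = (if j = 0 then 0 else aa j)"

primrec coef :: "nat \<Rightarrow> nat \<Rightarrow> nat \<Rightarrow> real" where
  "coef x 0 j = (if j = 0 then 1 else 0)"
| "coef x (Suc k) j = (if j \<le> k then lam * coef x k j / (aa (Suc k) - ee j)
      else if j = Suc k then (if Suc k \<le> x then 1 else 0) - (\<Sum>i\<le>k. lam * coef x k i / (aa (Suc k) - ee i))
      else 0)"

definition F :: "real \<Rightarrow> nat \<Rightarrow> nat \<Rightarrow> real" where
  "F t x k = (\<Sum>j\<le>k. coef x k j * exp (- ee j * t))"

definition DF :: "real \<Rightarrow> nat \<Rightarrow> nat \<Rightarrow> real" where
  "DF t x k = (if k = 0 then 0 else lam * F t x (k - 1) - aa k * F t x k)"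

definition Bq :: "(nat \<Rightarrow> real) \<Rightarrow> nat \<Rightarrow> real" where
  "Bq g x = lam * g (Suc x) + mu * (\<Sum>z<x. g z) - aa x * g x"

lemma aa_pos: "aa k > 0" using lam_pos mu_pos by (simp add: aa_def add_pos_nonneg)

lemma gap: assumes "j \<le> k" shows "aa (Suc k) - ee j > 0"
proof (cases "j = 0")
  case True then show ?thesis using aa_pos[of "Suc k"] by (simp add: ee_def)
next
  case False
  have "mu * real j \<le> mu * real k" using assms mu_pos by (intro mult_left_mono) auto
  then have "mu * real j < mu + mu * real k" using mu_pos by linarith
  then show ?thesis using False by (simp add: ee_def aa_def algebra_simps)
qed

lemma F_zero: "F t x 0 = 1" by (simp add: F_def ee_def)

lemma coef_sum: "(\<Sum>j\<le>k. coef x k j) = (if k \<le> x then 1 else 0)"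
proof (cases k)
  case 0 then show ?thesis by simp
next
  case (Suc k')
  have "(\<Sum>j\<le>Suc k'. coef x (Suc k') j) = (\<Sum>j\<le>k'. coef x (Suc k') j) + coef x (Suc k') (Suc k')"
    by (simp add: sum.atMost_Suc)
  also have "(\<Sum>j\<le>k'. coef x (Suc k') j) = (\<Sum>i\<le>k'. lam * coef x k' i / (aa (Suc k') - ee i))"
    by (rule sum.cong) auto
  finally show ?thesis using Suc by simp
qed

lemma F_init: "F 0 x k = (if k \<le> x then 1 else 0)"
  by (simp add: F_def coef_sum)

lemma F_deriv0: "((\<lambda>t. F t x k) has_real_derivative (\<Sum>j\<le>k. coef x k j * (- ee j) * exp (- ee j * t))) (at t)"
  unfolding F_def by (auto intro!: derivative_eq_intros simp: algebra_simps)

lemma F_deriv: "((\<lambda>t. F t x k) has_real_derivative DF t x k) (at t)"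
proof -
  have "(\<Sum>j\<le>k. coef x k j * (- ee j) * exp (- ee j * t)) = DF t x k"
  proof (cases k)
    case 0 then show ?thesis by (simp add: DF_def ee_def)
  next
    case (Suc k')
    have "(\<Sum>j\<le>k'. coef x (Suc k') j * (- ee j) * exp (- ee j * t))
        = (\<Sum>j\<le>k'. lam * (coef x k' j * exp (- ee j * t)) - aa (Suc k') * (coef x (Suc k') j * exp (- ee j * t)))"
    proof (rule sum.cong)
      fix j assume "j \<in> {..k'}"
      then have j: "j \<le> k'" by simp
      have g: "aa (Suc k') - ee j \<noteq> 0" using gap[OF j] by simp
      show "coef x (Suc k') j * (- ee j) * exp (- ee j * t) = lam * (coef x k' j * exp (- ee j * t)) - aa (Suc k') * (coef x (Suc k') j * exp (- ee j * t))"
        using j g by (simp add: field_simps)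
    qed simp
    then show ?thesis using Suc
      by (simp add: DF_def F_def sum.atMost_Suc sum_subtractf sum_distrib_left ee_def algebra_simps)
  qed
  then show ?thesis using F_deriv0[of x k t] by simp
qed

lemma F_cont: "continuous_on S (\<lambda>t. F t x k)"
  by (rule continuous_at_imp_continuous_on) (auto intro: DERIV_isCont F_deriv)

lemma Bq_lin: "Bq (\<lambda>z. a * f z - b * g z) x = a * Bq f x - b * Bq g x"
  unfolding Bq_def by (simp add: sum_subtractf sum_distrib_left algebra_simps)

lemma Bq_deriv: "((\<lambda>t. Bq (\<lambda>z. F t z k) x) has_real_derivative Bq (\<lambda>z. DF t z k) x) (at t)"
  unfolding Bq_def by (auto intro!: derivative_eq_intros F_deriv)

lemma DF_deriv: "((\<lambda>t. DF t x k) has_real_derivative (if k = 0 then 0 else lam * DF t x (k - 1) - aa k * DF t x k)) (at t)"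
proof (cases "k = 0")
  case True then show ?thesis by (simp add: DF_def)
next
  case False
  have eq: "(\<lambda>t. DF t x k) = (\<lambda>t. lam * F t x (k-1) - aa k * F t x k)"
    using False by (simp add: DF_def fun_eq_iff)
  show ?thesis unfolding eq using False by (auto intro!: derivative_eq_intros F_deriv)
qed

lemma cnt: "(\<Sum>z<x. if Suc k \<le> z then 1 else 0 :: real) = real (x - Suc k)"
  by (induction x) (auto simp: Suc_diff_le)

lemma F_backward: "Bq (\<lambda>z. F t z k) x = DF t x k"
proof (induction k arbitrary: t x)
  case 0
  then show ?case by (simp add: Bq_def F_zero DF_def aa_def)
next
  case (Suc k)
  fix t x
  define a where "a = aa (Suc k)"
  define Phi where "Phi s = Bq (\<lambda>z. F s z (Suc k)) x - DF s x (Suc k)" for s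
  have dPhi: "(Phi has_real_derivative (- a * Phi s)) (at s)" for s
  proof -
    have "(Phi has_real_derivative (Bq (\<lambda>z. DF s z (Suc k)) x - (lam * DF s x k - a * DF s x (Suc k)))) (at s)"
      unfolding Phi_def a_def using Bq_deriv[of k x s] DF_deriv[of x "Suc k" s]
      by (auto intro!: derivative_eq_intros Bq_deriv DF_deriv)
    moreover have "Bq (\<lambda>z. DF s z (Suc k)) x = lam * Bq (\<lambda>z. F s z k) x - a * Bq (\<lambda>z. F s z (Suc k)) x"
      unfolding a_def DF_def by (simp add: Bq_lin)
    moreover have "Bq (\<lambda>z. F s z k) x = DF s x k" by (rule Suc.IH)
    ultimately show ?thesis by (simp add: Phi_def algebra_simps)
  qed
  define G where "G s = exp (a * s) * Phi s" for s
  have "(G has_real_derivative 0) (at s)" for s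
    unfolding G_def using dPhi[of s]
    by (auto intro!: derivative_eq_intros simp: algebra_simps)
  then have "G t = G 0" by (intro DERIV_isconst_all) auto
  moreover have "Phi 0 = 0"
  proof -
    have "Bq (\<lambda>z. F 0 z (Suc k)) x = lam * (if k \<le> x then 1 else 0) + mu * real (x - Suc k) - aa x * (if Suc k \<le> x then 1 else 0)"
      unfolding Bq_def F_init cnt by simp
    moreover have "DF 0 x (Suc k) = lam * (if k \<le> x then 1 else 0) - aa (Suc k) * (if Suc k \<le> x then 1 else 0)"
      by (simp add: DF_def F_init)
    ultimately show ?thesis unfolding Phi_def
      by (cases "Suc k \<le> x") (auto simp: aa_def of_nat_diff algebra_simps)
  qed
  ultimately have "Phi t = 0" by (simp add: G_def)
  then show "Bq (\<lambda>z. F t z (Suc k)) x = DF t x (Suc k)" by (simp add: Phi_def)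
qed

end



lemma pos_ode:
  fixes y g :: "real \<Rightarrow> real" and a t :: real
  assumes d: "\<And>s. 0 \<le> s \<Longrightarrow> (y has_real_derivative (- a * y s + g s)) (at s)"
    and g: "\<And>s. 0 \<le> s \<Longrightarrow> 0 \<le> g s" and y0: "0 \<le> y 0" and t: "0 \<le> t"
  shows "0 \<le> y t"
proof -
  define h where "h s = exp (a * s) * y s" for s
  have dh: "(h has_real_derivative exp (a * s) * g s) (at s)" if "0 \<le> s" for s
    unfolding h_def using d[OF that]
    by (auto intro!: derivative_eq_intros simp: algebra_simps)
  have "h 0 \<le> h t"
  proof (rule DERIV_nonneg_imp_increasing_open[OF t])
    fix s assume "0 < s" "s < t"
    then show "\<exists>D. (h has_real_derivative D) (at s) \<and> 0 \<le> D"
      using dh[of s] g[of s] by (intro exI[of _ "exp (a * s) * g s"]) auto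
  next
    show "continuous_on {0..t} h"
    proof (rule continuous_at_imp_continuous_on, rule ballI)
      fix s assume "s \<in> {0..t}"
      then show "isCont h s" using dh[of s] by (auto intro: DERIV_isCont)
    qed
  qed
  then have "0 \<le> exp (a * t) * y t" using y0 by (simp add: h_def)
  then show ?thesis by (simp add: zero_le_mult_iff)
qed

context chain begin

lemma F_nonneg: "0 \<le> t \<Longrightarrow> 0 \<le> F t x k"
proof (induction k arbitrary: t)
  case 0 then show ?case by (simp add: F_zero)
next
  case (Suc k)
  show ?case
  proof (rule pos_ode[where y="\<lambda>s. F s x (Suc k)" and a="aa (Suc k)" and g="\<lambda>s. lam * F s x k"])
    fix s :: real assume "0 \<le> s"
    show "((\<lambda>t. F t x (Suc k)) has_real_derivative (- aa (Suc k) * F s x (Suc k) + lam * F s x k)) (at s)"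
      using F_deriv[of x "Suc k" s] by (simp add: DF_def)
    show "0 \<le> lam * F s x k" using Suc.IH[OF \<open>0 \<le> s\<close>] lam_pos by simp
  qed (use Suc.prems in \<open>auto simp: F_init\<close>)
qed

lemma F_mono: "0 \<le> t \<Longrightarrow> F t x (Suc k) \<le> F t x k"
proof (induction k arbitrary: t)
  case 0
  have "0 \<le> F t x 0 - F t x (Suc 0)"
  proof (rule pos_ode[where y="\<lambda>s. F s x 0 - F s x (Suc 0)" and a="aa 0" and g="\<lambda>s. mu * F s x 1"])
    fix s :: real assume s: "0 \<le> s"
    show "((\<lambda>t. F t x 0 - F t x (Suc 0)) has_real_derivative (- aa 0 * (F s x 0 - F s x (Suc 0)) + mu * F s x 1)) (at s)"
      using F_deriv[of x 0 s] F_deriv[of x "Suc 0" s]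
      by (auto intro!: derivative_eq_intros simp: DF_def F_zero aa_def algebra_simps)
    show "0 \<le> mu * F s x 1" using F_nonneg[OF s] mu_pos by simp
  qed (use 0 in \<open>auto simp: F_init\<close>)
  then show ?case by simp
next
  case (Suc k)
  have "0 \<le> F t x (Suc k) - F t x (Suc (Suc k))"
  proof (rule pos_ode[where y="\<lambda>s. F s x (Suc k) - F s x (Suc (Suc k))" and a="aa (Suc k)" and g="\<lambda>s. lam * (F s x k - F s x (Suc k)) + mu * F s x (Suc (Suc k))"])
    fix s :: real assume s: "0 \<le> s"
    show "((\<lambda>t. F t x (Suc k) - F t x (Suc (Suc k))) has_real_derivative
       (- aa (Suc k) * (F s x (Suc k) - F s x (Suc (Suc k))) + (lam * (F s x k - F s x (Suc k)) + mu * F s x (Suc (Suc k))))) (at s)"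
      using F_deriv[of x "Suc k" s] F_deriv[of x "Suc (Suc k)" s]
      by (auto intro!: derivative_eq_intros simp: DF_def aa_def algebra_simps)
    show "0 \<le> lam * (F s x k - F s x (Suc k)) + mu * F s x (Suc (Suc k))"
      using F_nonneg[OF s] Suc.IH[OF s] mu_pos lam_pos by simp
  qed (use Suc.prems in \<open>auto simp: F_init\<close>)
  then show ?case by simp
qed

lemma F_le1: "0 \<le> t \<Longrightarrow> F t x k \<le> 1"
proof (induction k)
  case 0 then show ?case by (simp add: F_zero)
next
  case (Suc k) then show ?case using F_mono[of t x k] by simp
qed

lemma maxprin:
  fixes e :: "real \<Rightarrow> nat \<Rightarrow> real" and K :: nat
  assumes cont: "\<And>x. x \<le> K \<Longrightarrow> continuous_on {0..} (\<lambda>t. e t x)"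
    and der: "\<And>t x. 0 < t \<Longrightarrow> x \<le> K \<Longrightarrow> \<exists>D. ((\<lambda>s. e s x) has_real_derivative D) (at t) \<and> Bq (e t) x \<le> D"
    and bd: "\<And>t. 0 \<le> t \<Longrightarrow> 0 \<le> e t (Suc K)"
    and init: "\<And>x. x \<le> K \<Longrightarrow> 0 \<le> e 0 x"
    and t: "0 \<le> t" and x: "x \<le> K"
  shows "0 \<le> e t x"
proof (rule ccontr)
  assume "\<not> 0 \<le> e t x"
  then have neg: "e t x < 0" by simp
  define eps where "eps = - e t x / (2 * exp t)"
  have eps: "eps > 0" using neg by (simp add: eps_def divide_neg_pos)
  define w where "w s z = e s z + eps * exp s" for s z
  have wt: "w t x < 0" using neg by (simp add: w_def eps_def)
  define S where "S = (\<Union>z\<in>{..K}. {0..} \<inter> (\<lambda>s. w s z) -` {..0})"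
  have cw: "continuous_on {0..} (\<lambda>s. w s z)" if "z \<le> K" for z
    unfolding w_def using cont[OF that] by (intro continuous_intros) auto
  have clS: "closed S" unfolding S_def
    by (intro closed_UN ballI continuous_closed_preimage cw) auto
  have tS: "t \<in> S" using t x wt by (auto simp: S_def intro!: bexI[of _ x])
  have bddS: "bdd_below S" unfolding S_def by (rule bdd_belowI[of _ 0]) auto
  define t0 where "t0 = Inf S"
  have t0S: "t0 \<in> S" unfolding t0_def using clS tS bddS by (intro closed_contains_Inf) auto
  then obtain x0 where x0: "x0 \<le> K" "w t0 x0 \<le> 0" and t0nn: "0 \<le> t0" by (auto simp: S_def)
  have before: "0 < w s z" if "0 \<le> s" "s < t0" "z \<le> K" for s z
  proof (rule ccontr)
    assume "\<not> 0 < w s z"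
    then have "s \<in> S" using that by (auto simp: S_def intro!: bexI[of _ z])
    then have "t0 \<le> s" unfolding t0_def using bddS by (rule cInf_lower)
    then show False using that by simp
  qed
  have t0pos: "0 < t0"
  proof (rule ccontr)
    assume "\<not> 0 < t0"
    then have "t0 = 0" using t0nn by simp
    then have "w 0 x0 \<le> 0" using x0 by simp
    moreover have "0 < w 0 x0" using init[OF x0(1)] eps by (simp add: w_def)
    ultimately show False by simp
  qed
  have at_t0: "0 \<le> w t0 z" if z: "z \<le> K" for z
  proof -
    obtain D where "((\<lambda>s. e s z) has_real_derivative D) (at t0)" using der[OF t0pos z] by blast
    then have "isCont (\<lambda>s. e s z) t0" by (rule DERIV_isCont)
    then have "isCont (\<lambda>s. w s z) t0" unfolding w_def by (intro continuous_intros)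
    then have lim: "((\<lambda>s. w s z) \<longlongrightarrow> w t0 z) (at_left t0)"
      unfolding isCont_def by (rule tendsto_within_subset) auto
    have "\<forall>\<^sub>F s in at_left t0. s \<in> {0<..<t0}" using t0pos by (intro eventually_at_left_real)
    then have "\<forall>\<^sub>F s in at_left t0. 0 \<le> w s z"
      by eventually_elim (use before z in \<open>auto intro: less_imp_le\<close>)
    then show ?thesis using lim by (intro tendsto_lowerbound[OF lim]) (auto simp: trivial_limit_at_left_real)
  qed
  define E where "E = exp t0"
  have E: "E > 0" by (simp add: E_def)
  have elow: "- eps * E \<le> e t0 z" if "z \<le> K" for z using at_t0[OF that] by (simp add: w_def E_def)
  have ex0: "e t0 x0 \<le> - eps * E" using x0 by (simp add: w_def E_def)
  obtain D where D: "((\<lambda>s. e s x0) has_real_derivative D) (at t0)" "Bq (e t0) x0 \<le> D"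
    using der[OF t0pos x0(1)] by blast
  have "0 \<le> Bq (e t0) x0"
  proof -
    have s1: "- eps * E \<le> e t0 (Suc x0)"
    proof (cases "Suc x0 \<le> K")
      case True then show ?thesis by (rule elow)
    next
      case False then have "Suc x0 = Suc K" using x0 by simp
      moreover have "0 \<le> eps * E" using eps E by simp
      ultimately show ?thesis using bd[OF t0nn] by simp
    qed
    have s2: "real x0 * (- eps * E) \<le> (\<Sum>z<x0. e t0 z)"
    proof -
      have "(\<Sum>z<x0. - eps * E) \<le> (\<Sum>z<x0. e t0 z)"
        using x0 by (intro sum_mono elow) auto
      then show ?thesis by simp
    qed
    have s3: "aa x0 * (eps * E) \<le> - aa x0 * e t0 x0"
    proof -
      have "aa x0 * e t0 x0 \<le> aa x0 * (- eps * E)" using ex0 aa_pos[of x0] by (intro mult_left_mono) auto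
      then show ?thesis by simp
    qed
    have "lam * (- eps * E) + mu * (real x0 * (- eps * E)) + aa x0 * (eps * E) = 0"
      by (simp add: aa_def algebra_simps)
    moreover have "lam * (- eps * E) \<le> lam * e t0 (Suc x0)" using s1 lam_pos by (intro mult_left_mono) auto
    moreover have "mu * (real x0 * (- eps * E)) \<le> mu * (\<Sum>z<x0. e t0 z)" using s2 mu_pos by (intro mult_left_mono) auto
    ultimately show ?thesis using s3 unfolding Bq_def by linarith
  qed
  then have Dnn: "0 \<le> D" using D(2) by simp
  have dw: "((\<lambda>s. w s x0) has_real_derivative D + eps * exp t0) (at t0)"
    unfolding w_def using D(1) by (auto intro!: derivative_eq_intros)
  have "0 < D + eps * exp t0" using Dnn eps by (simp add: add_nonneg_pos)
  from DERIV_pos_inc_left[OF dw this] obtain d where d: "d > 0" "\<And>h. h > 0 \<Longrightarrow> h < d \<Longrightarrow> w (t0 - h) x0 < w t0 x0"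
    by blast
  define h where "h = min (d / 2) (t0 / 2)"
  have h: "h > 0" "h < d" "h < t0" using d t0pos by (auto simp: h_def)
  have "w (t0 - h) x0 < w t0 x0" using d(2)[OF h(1) h(2)] .
  moreover have "0 < w (t0 - h) x0" using before[of "t0 - h" x0] h x0 by simp
  ultimately show False using x0 by simp
qed

end



context chain begin

lemma Bq_add: "Bq (\<lambda>z. f z + g z) x = Bq f x + Bq g x"
  unfolding Bq_def by (simp add: sum.distrib algebra_simps)

lemma Bq_diff: "Bq (\<lambda>z. f z - g z) x = Bq f x - Bq g x"
  unfolding Bq_def by (simp add: sum_subtractf algebra_simps)

lemma Bq_exp: assumes "0 \<le> c" shows "Bq (\<lambda>z. c * 2 ^ z) x \<le> lam * (c * 2 ^ x)"
proof -
  have "(\<Sum>z<x. c * 2 ^ z) \<le> of_nat (card {..<x}) * (c * 2 ^ x)"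
    by (rule sum_bounded_above) (use assms in \<open>auto intro!: mult_left_mono power_increasing\<close>)
  then have "mu * (\<Sum>z<x. c * 2 ^ z) \<le> mu * (real x * (c * 2 ^ x))"
    using mu_pos by (intro mult_left_mono) auto
  then show ?thesis unfolding Bq_def aa_def by (simp add: algebra_simps)
qed

lemma F_decay: assumes t: "0 \<le> t" shows "F t x N \<le> exp (lam * t) / 2 ^ N * 2 ^ x"
proof -
  define c0 where "c0 = (1::real) / 2 ^ N"
  have c0: "0 \<le> c0" by (simp add: c0_def)
  define e where "e s z = exp (lam * s) * c0 * 2 ^ z - F s z N" for s z
  define K where "K = max x N"
  have "0 \<le> e t x"
  proof (rule maxprin[where K=K and e=e])
    fix z assume "z \<le> K"
    show "continuous_on {0..} (\<lambda>s. e s z)" unfolding e_def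
      by (intro continuous_intros F_cont)
  next
    fix s :: real and z assume s: "0 < s" "z \<le> K"
    have "((\<lambda>s. e s z) has_real_derivative (lam * (exp (lam * s) * c0 * 2 ^ z) - DF s z N)) (at s)"
      unfolding e_def by (auto intro!: derivative_eq_intros F_deriv simp: algebra_simps)
    moreover have "Bq (e s) z \<le> lam * (exp (lam * s) * c0 * 2 ^ z) - DF s z N"
    proof -
      have "Bq (e s) z = Bq (\<lambda>z. exp (lam * s) * c0 * 2 ^ z) z - Bq (\<lambda>z. F s z N) z"
        unfolding e_def by (rule Bq_diff)
      also have "Bq (\<lambda>z. F s z N) z = DF s z N" by (rule F_backward)
      finally show ?thesis using Bq_exp[of "exp (lam * s) * c0" z] c0 by simp
    qed
    ultimately show "\<exists>D. ((\<lambda>s. e s z) has_real_derivative D) (at s) \<and> Bq (e s) z \<le> D" by blast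
  next
    fix s :: real assume s: "0 \<le> s"
    have "(2::real) ^ N \<le> 2 ^ Suc K" by (rule power_increasing) (auto simp: K_def)
    then have "(1::real) \<le> 2 ^ Suc K * c0" by (simp add: c0_def)
    also have "\<dots> \<le> exp (lam * s) * c0 * 2 ^ Suc K"
    proof -
      have ex: "1 \<le> exp (lam * s)" using s lam_pos by simp
      have "2 ^ Suc K * c0 * 1 \<le> 2 ^ Suc K * c0 * exp (lam * s)"
        by (rule mult_left_mono[OF ex]) (simp add: c0)
      then show ?thesis by (simp add: ac_simps)
    qed
    finally show "0 \<le> e s (Suc K)" using F_le1[OF s, of "Suc K" N] by (simp add: e_def)
  next
    fix z assume "z \<le> K"
    show "0 \<le> e 0 z" by (auto simp: e_def c0_def F_init le_divide_eq power_increasing)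
  qed (use t in \<open>auto simp: K_def\<close>)
  then show ?thesis by (simp add: e_def c0_def)
qed

lemma F_tendsto: assumes t: "0 \<le> t" shows "(\<lambda>N. F t x N) \<longlonglongrightarrow> 0"
proof (rule tendsto_sandwich[where f="\<lambda>_. 0" and h="\<lambda>N. exp (lam * t) * 2 ^ x / 2 ^ N"])
  show "\<forall>\<^sub>F N in sequentially. 0 \<le> F t x N" using F_nonneg[OF t] by simp
  show "\<forall>\<^sub>F N in sequentially. F t x N \<le> exp (lam * t) * 2 ^ x / 2 ^ N"
    using F_decay[OF t] by simp
  show "(\<lambda>N. exp (lam * t) * 2 ^ x / 2 ^ N) \<longlonglongrightarrow> 0"
    by (rule LIMSEQ_divide_realpow_zero) simp
qed simp

definition Pm :: "real \<Rightarrow> nat \<Rightarrow> nat \<Rightarrow> real" where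
  "Pm t x y = F t x y - F t x (Suc y)"

lemma Pm_nonneg: "0 \<le> t \<Longrightarrow> 0 \<le> Pm t x y"
  using F_mono by (simp add: Pm_def)

lemma Pm_le1: "0 \<le> t \<Longrightarrow> Pm t x y \<le> 1"
  using F_le1[of t x y] F_nonneg[of t x "Suc y"] by (simp add: Pm_def)

lemma Pm_sums: assumes "0 \<le> t" shows "(\<lambda>y. Pm t x y) sums 1"
proof -
  have "(\<lambda>n. 1 - F t x n) \<longlonglongrightarrow> 1 - 0" by (intro tendsto_intros F_tendsto assms)
  moreover have "(\<Sum>y<n. Pm t x y) = 1 - F t x n" for n
    unfolding Pm_def by (simp add: sum_lessThan_telescope' F_zero)
  ultimately show ?thesis unfolding sums_def by simp
qed

lemma qsum: "(\<Sum>z. qrate lam mu x z * f z) = Bq f x"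
proof -
  have "(\<Sum>z. qrate lam mu x z * f z) = (\<Sum>z\<le>Suc x. qrate lam mu x z * f z)"
    by (rule suminf_row) (simp add: qrate_def)
  also have "\<dots> = (\<Sum>z<x. qrate lam mu x z * f z) + qrate lam mu x x * f x + qrate lam mu x (Suc x) * f (Suc x)"
    by (simp add: sum.atMost_Suc lessThan_Suc_atMost[symmetric])
  also have "(\<Sum>z<x. qrate lam mu x z * f z) = mu * (\<Sum>z<x. f z)"
    by (simp add: sum_distrib_left qrate_def)
  finally show ?thesis by (simp add: Bq_def qrate_def aa_def algebra_simps)
qed

lemma Pm_deriv: "((\<lambda>s. Pm s x y) has_real_derivative Bq (\<lambda>z. Pm t z y) x) (at t)"
proof -
  have "((\<lambda>s. Pm s x y) has_real_derivative DF t x y - DF t x (Suc y)) (at t)"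
    unfolding Pm_def by (intro derivative_intros F_deriv)
  moreover have "DF t x y - DF t x (Suc y) = Bq (\<lambda>z. Pm t z y) x"
    unfolding Pm_def Bq_diff F_backward ..
  ultimately show ?thesis by simp
qed

lemma Pm_sol: "backward_nonneg_solution (qrate lam mu) Pm"
  unfolding backward_nonneg_solution_def
proof (intro conjI allI impI)
  fix t :: real and x y assume "0 \<le> t" then show "0 \<le> Pm t x y" by (rule Pm_nonneg)
next
  fix x y show "Pm 0 x y = (if x = y then 1 else 0)" by (auto simp: Pm_def F_init)
next
  fix x y
  have "isCont (\<lambda>s. Pm s x y) 0" using Pm_deriv by (rule DERIV_isCont)
  then show "((\<lambda>s. Pm s x y) \<longlongrightarrow> Pm 0 x y) (at_right 0)"
    unfolding isCont_def by (rule tendsto_within_subset) auto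
next
  fix t :: real and x y assume "0 < t"
  show "((\<lambda>s. Pm s x y) has_real_derivative (\<Sum>z. qrate lam mu x z * Pm t z y)) (at t)"
    unfolding qsum by (rule Pm_deriv)
qed

lemma sol_cont:
  assumes "backward_nonneg_solution (qrate lam mu) p"
  shows "continuous_on {0..} (\<lambda>s. p s x y)"
proof -
  have "continuous (at s within {0..}) (\<lambda>s. p s x y)" if "s \<in> {0..}" for s
  proof (cases "s = 0")
    case True
    have "((\<lambda>s. p s x y) \<longlongrightarrow> p 0 x y) (at_right 0)"
      using assms unfolding backward_nonneg_solution_def by blast
    then show ?thesis using True by (simp add: continuous_within at_within_Ici_at_right)
  next
    case False
    then have "s > 0" using that by simp
    then have "((\<lambda>s. p s x y) has_real_derivative (\<Sum>z. qrate lam mu x z * p s z y)) (at s)"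
      using assms unfolding backward_nonneg_solution_def by blast
    then have "isCont (\<lambda>s. p s x y) s" by (rule DERIV_isCont)
    then show ?thesis by (rule continuous_at_imp_continuous_at_within)
  qed
  then show ?thesis by (simp add: continuous_on_eq_continuous_within)
qed

lemma compare:
  assumes sol: "backward_nonneg_solution (qrate lam mu) p" and t: "0 \<le> t"
  shows "Pm t x y \<le> p t x y"
proof -
  have bnd: "Pm t x y - p t x y \<le> exp (lam * t) / 2 ^ Suc K * 2 ^ x" if Kx: "x \<le> K" for K
  proof -
    define c where "c s = exp (lam * s) / 2 ^ Suc K" for s
    define e where "e s z = p s z y - Pm s z y + c s * 2 ^ z" for s z
    have "0 \<le> e t x"
    proof (rule maxprin[where K=K and e=e])
      fix z assume "z \<le> K"
      show "continuous_on {0..} (\<lambda>s. e s z)" unfolding e_def c_def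
        by (intro continuous_intros sol_cont[OF sol] continuous_at_imp_continuous_on ballI DERIV_isCont[OF Pm_deriv]) auto
    next
      fix s :: real and z assume s: "0 < s" "z \<le> K"
      have dp: "((\<lambda>s. p s z y) has_real_derivative Bq (\<lambda>w. p s w y) z) (at s)"
        using sol s unfolding backward_nonneg_solution_def qsum by blast
      have "((\<lambda>s. e s z) has_real_derivative (Bq (\<lambda>w. p s w y) z - Bq (\<lambda>w. Pm s w y) z + lam * (c s * 2 ^ z))) (at s)"
        unfolding e_def c_def by (auto intro!: derivative_eq_intros dp Pm_deriv simp: algebra_simps)
      moreover have "Bq (e s) z \<le> Bq (\<lambda>w. p s w y) z - Bq (\<lambda>w. Pm s w y) z + lam * (c s * 2 ^ z)"
      proof -
        have "Bq (e s) z = Bq (\<lambda>w. p s w y) z - Bq (\<lambda>w. Pm s w y) z + Bq (\<lambda>w. c s * 2 ^ w) z"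
          unfolding e_def Bq_add Bq_diff ..
        moreover have "Bq (\<lambda>w. c s * 2 ^ w) z \<le> lam * (c s * 2 ^ z)" by (rule Bq_exp) (simp add: c_def)
        ultimately show ?thesis by simp
      qed
      ultimately show "\<exists>D. ((\<lambda>s. e s z) has_real_derivative D) (at s) \<and> Bq (e s) z \<le> D" by blast
    next
      fix s :: real assume s: "0 \<le> s"
      have "p s (Suc K) y \<ge> 0" using sol s unfolding backward_nonneg_solution_def by blast
      moreover have "Pm s (Suc K) y \<le> 1" by (rule Pm_le1[OF s])
      moreover have "c s * 2 ^ Suc K \<ge> 1" using s lam_pos by (simp add: c_def)
      ultimately show "0 \<le> e s (Suc K)" by (simp add: e_def)
    next
      fix z assume "z \<le> K"
      have "p 0 z y = Pm 0 z y"
        using sol Pm_sol unfolding backward_nonneg_solution_def by simp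
      then show "0 \<le> e 0 z" by (simp add: e_def c_def)
    qed (use t Kx in auto)
    then show ?thesis by (simp add: e_def c_def)
  qed
  have lim: "(\<lambda>K. exp (lam * t) * 2 ^ x / 2 ^ Suc K) \<longlonglongrightarrow> 0"
    using LIMSEQ_Suc[OF LIMSEQ_divide_realpow_zero[of 2 "exp (lam * t) * 2 ^ x"]] by simp
  have "Pm t x y - p t x y \<le> 0"
  proof (rule tendsto_lowerbound[OF lim])
    show "\<forall>\<^sub>F K in sequentially. Pm t x y - p t x y \<le> exp (lam * t) * 2 ^ x / 2 ^ Suc K"
      using bnd unfolding eventually_sequentially by (intro exI[of _ x]) (auto simp: mult.commute)
  qed simp
  then show ?thesis by simp
qed

lemma minimal_sums:
  assumes "minimal_backward_solution (qrate lam mu) p" and t: "0 \<le> t"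
  shows "(\<lambda>y. p t x y) sums 1"
proof -
  have sol: "backward_nonneg_solution (qrate lam mu) p"
    and min: "\<And>y. p t x y \<le> Pm t x y"
    using assms Pm_sol unfolding minimal_backward_solution_def by auto
  have "p t x y = Pm t x y" for y using min[of y] compare[OF sol t, of x y] by simp
  then have "(\<lambda>y. p t x y) = (\<lambda>y. Pm t x y)" by auto
  then show ?thesis using Pm_sums[OF t] by simp
qed

end

theorem mainTheorem1:
  fixes lam mu :: real
  assumes "lam > 0" and "mu > 0"
  shows "dtmc_irreducible (jump lam mu) \<and> dtmc_recurrent (jump lam mu) \<and>
         (\<forall>p. minimal_backward_solution (qrate lam mu) p \<longrightarrow>
              (\<forall>x. \<forall>t\<ge>0. (\<lambda>y. p t x y) sums 1))"
proof -
  interpret chain lam mu using assms by unfold_locales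
  show ?thesis using irreducible recurrent minimal_sums by blast
qed

end
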